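(* Let $\mathbf{C}$ be a covering of a finite nonempty set $U$. Then $\mathbf{C}$ is an invariable covering if and only if every $x\in U$ has a core block in $\mathbf{C}$ and every $K\in\mathbf{C}$ is the core block of at least one element of $U$.
   Context: A covering of $U$ is a family (set) $\mathbf{C}$ of subsets of $U$ with $\emptyset\notin\mathbf{C}$ and $\bigcup\mathbf{C}=U$; its elements are called blocks. The membership repeat degree of $x\in U$ is $\partial(x)=|\{K\in\mathbf{C}: x\in K\}|$. The common block repeat degree of $(x,y)\in U\times U$ is $\lambda(x,y)=|\{K\in\mathbf{C}: \{x,y\}\subseteq K\}|$. A block $K\in\mathbf{C}$ is a core block of $x\in U$ if $x\in K$ and $\lambda(x,y)=\partial(x)$ for every $y\in K$. A block $K\in\mathbf{C}$ is a reducible element of $\mathbf{C}$ if $K$ is the union of some subfamily of $\mathbf{C}\setminus\{K\}$; otherwise it is irreducible. $\mathbf{C}$ is irreducible if all its blocks are irreducible elements. $\mathbf{C}$ is an invariable covering if $\mathbf{C}$ is irreducible and every $x\in U$ has a core block in $\mathbf{C}$. *)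

theory Defs
  imports Main
begin

definition covering :: "'a set \<Rightarrow> 'a set set \<Rightarrow> bool" where
  "covering U C \<longleftrightarrow> {} \<notin> C \<and> \<Union>C = U"

definition mrd :: "'a set set \<Rightarrow> 'a \<Rightarrow> nat" where
  "mrd C x = card {K \<in> C. x \<in> K}"

definition cbrd :: "'a set set \<Rightarrow> 'a \<Rightarrow> 'a \<Rightarrow> nat" where
  "cbrd C x y = card {K \<in> C. {x, y} \<subseteq> K}"

definition core_block :: "'a set set \<Rightarrow> 'a \<Rightarrow> 'a set \<Rightarrow> bool" where
  "core_block C x K \<longleftrightarrow> K \<in> C \<and> x \<in> K \<and> (\<forall>y\<in>K. cbrd C x y = mrd C x)"

definition reducible_elem :: "'a set set \<Rightarrow> 'a set \<Rightarrow> bool" where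
  "reducible_elem C K \<longleftrightarrow> K \<in> C \<and> (\<exists>S. S \<subseteq> C - {K} \<and> K = \<Union>S)"

definition irreducible_covering :: "'a set set \<Rightarrow> bool" where
  "irreducible_covering C \<longleftrightarrow> (\<forall>K\<in>C. \<not> reducible_elem C K)"

definition invariable_covering :: "'a set \<Rightarrow> 'a set set \<Rightarrow> bool" where
  "invariable_covering U C \<longleftrightarrow> irreducible_covering C \<and> (\<forall>x\<in>U. \<exists>K. core_block C x K)"

end

theory Submission
  imports Defs
begin

lemma core_iff:
  assumes fin: "finite C"
  shows "core_block C x K \<longleftrightarrow> K \<in> C \<and> x \<in> K \<and> (\<forall>K'\<in>C. x \<in> K' \<longrightarrow> K \<subseteq> K')"
proof
  assume c: "core_block C x K"
  hence KC: "K \<in> C" "x \<in> K" and eq: "\<forall>y\<in>K. cbrd C x y = mrd C x"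
    by (auto simp: core_block_def)
  have "\<forall>K'\<in>C. x \<in> K' \<longrightarrow> K \<subseteq> K'"
  proof (intro ballI impI subsetI)
    fix K' y assume K': "K' \<in> C" "x \<in> K'" and y: "y \<in> K"
    have sub: "{A \<in> C. {x, y} \<subseteq> A} \<subseteq> {A \<in> C. x \<in> A}" by auto
    have "card {A \<in> C. {x, y} \<subseteq> A} = card {A \<in> C. x \<in> A}"
      using eq y by (simp add: cbrd_def mrd_def)
    hence "{A \<in> C. {x, y} \<subseteq> A} = {A \<in> C. x \<in> A}"
      using card_subset_eq[OF _ sub] fin by auto
    thus "y \<in> K'" using K' by blast
  qed
  thus "K \<in> C \<and> x \<in> K \<and> (\<forall>K'\<in>C. x \<in> K' \<longrightarrow> K \<subseteq> K')" using KC by blast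
next
  assume a: "K \<in> C \<and> x \<in> K \<and> (\<forall>K'\<in>C. x \<in> K' \<longrightarrow> K \<subseteq> K')"
  have "\<forall>y\<in>K. {A \<in> C. {x, y} \<subseteq> A} = {A \<in> C. x \<in> A}" using a by blast
  thus "core_block C x K" using a by (simp add: core_block_def cbrd_def mrd_def)
qed

theorem proposition22:
  fixes U :: "'a set" and C :: "'a set set"
  assumes "finite U" and "U \<noteq> {}" and "covering U C"
  shows "invariable_covering U C \<longleftrightarrow>
    ((\<forall>x\<in>U. \<exists>K. core_block C x K) \<and> (\<forall>K\<in>C. \<exists>x\<in>U. core_block C x K))"
proof -
  have CU: "C \<subseteq> Pow U" and ne: "{} \<notin> C" using assms(3) by (auto simp: covering_def)
  have fin: "finite C" using finite_subset[OF CU] assms(1) by simp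
  note ci = core_iff[OF fin]
  show ?thesis
  proof
    assume inv: "invariable_covering U C"
    hence irr: "\<forall>K\<in>C. \<not> reducible_elem C K" and cb: "\<forall>x\<in>U. \<exists>K. core_block C x K"
      by (auto simp: invariable_covering_def irreducible_covering_def)
    have "\<forall>K\<in>C. \<exists>x\<in>U. core_block C x K"
    proof (rule ballI, rule ccontr)
      fix K assume K: "K \<in> C" and n: "\<not> (\<exists>x\<in>U. core_block C x K)"
      have KU: "K \<subseteq> U" using K CU by auto
      have "\<forall>x\<in>K. \<exists>K'. core_block C x K'" using cb KU by blast
      then obtain f where f: "\<forall>x\<in>K. core_block C x (f x)" by metis
      have "f ` K \<subseteq> C - {K}"
      proof
        fix A assume "A \<in> f ` K"
        then obtain x where x: "x \<in> K" "A = f x" by blast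
        have "A \<in> C" using f x by (simp add: core_block_def)
        moreover have "A \<noteq> K"
        proof
          assume "A = K"
          hence "core_block C x K" using f x by blast
          thus False using n KU x by blast
        qed
        ultimately show "A \<in> C - {K}" by blast
      qed
      moreover have "K = \<Union>(f ` K)"
      proof
        show "K \<subseteq> \<Union>(f ` K)" using f by (auto simp: core_block_def)
        show "\<Union>(f ` K) \<subseteq> K"
        proof
          fix y assume "y \<in> \<Union>(f ` K)"
          then obtain x where x: "x \<in> K" "y \<in> f x" by blast
          have "core_block C x (f x)" using f x by blast
          hence "f x \<subseteq> K" using x K ci by blast
          thus "y \<in> K" using x by blast
        qed
      qed
      ultimately have "reducible_elem C K" using K by (auto simp: reducible_elem_def)
      thus False using irr K by blast
    qed
    thus "(\<forall>x\<in>U. \<exists>K. core_block C x K) \<and> (\<forall>K\<in>C. \<exists>x\<in>U. core_block C x K)" using cb by blast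
  next
    assume h: "(\<forall>x\<in>U. \<exists>K. core_block C x K) \<and> (\<forall>K\<in>C. \<exists>x\<in>U. core_block C x K)"
    have "irreducible_covering C"
      unfolding irreducible_covering_def
    proof (intro ballI notI)
      fix K assume K: "K \<in> C" and r: "reducible_elem C K"
      then obtain S where S: "S \<subseteq> C - {K}" "K = \<Union>S" by (auto simp: reducible_elem_def)
      obtain x where x: "core_block C x K" using h K by blast
      hence "x \<in> K" by (simp add: core_block_def)
      then obtain K' where K': "K' \<in> S" "x \<in> K'" using S by blast
      have "K' \<in> C" using K' S by blast
      hence "K \<subseteq> K'" using x K'(2) ci by blast
      moreover have "K' \<subseteq> K" using K' S by auto
      ultimately show False using K' S by auto
    qed
    thus "invariable_covering U C" using h by (simp add: invariable_covering_def)
  qed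
qed

end
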